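(* Let $\mathcal X$ be a nonsingular plane curve of degree $r+1$ and genus $g$ over $\mathbf F_q$ with at least one $\mathbf F_q$-rational point. Let $N$ be an integer with $0\le N\le 2g-2$. Write $\lfloor N/2\rfloor=\alpha r+\beta$ with $0\le\beta<r$, and assume $\alpha\ge1$. (1) If $\lfloor N/2\rfloor$ is a gap of $\mathcal X$, then $R(N)=\min\{\tilde\ell(\lfloor N/2\rfloor)+\tilde\ell(\lceil N/2\rceil),\ \tilde\ell(\alpha r-1)+\tilde\ell(N-\alpha r+1)\}$. (2) If $\lfloor N/2\rfloor\in GS(\mathcal X)$, then $R(N)=\tilde\ell(\alpha r-1)+\tilde\ell(N-\alpha r+1)$.
   Context: $\ell(A)=\dim_{\mathbf F_q}\mathcal L(A)$. For $i\ge1$, $\gamma_i=\min\{\deg A: A\ \mathbf F_q\text{-rational divisor},\ \ell(A)\ge i\}$, and $GS(\mathcal X)=\{\gamma_i:i\ge1\}$. For such a plane curve it is known that $GS(\mathcal X)$ is the numerical semigroup generated by $r$ and $r+1$, and that $g=r(r-1)/2$. Let $\mathbf N'=\{-1,0,1,\dots\}$; a gap is an element of $\mathbf N'\setminus GS(\mathcal X)$. Define $\tilde\ell(-1)=0$ and $\tilde\ell(b)=\max\{i\ge1:\gamma_i\le b\}$ for $b\ge0$. For $-1\le M\le 2g-2$, let $R(M)=\min\{\tilde\ell(a)+\tilde\ell(b):a,b\in\mathbf N',\ a+b=M\}$. *)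

theory Defs
  imports Main "HOL-Library.Infinite_Set"
begin

text \<open>Weierstrass semigroup GS of a nonsingular plane curve of degree r+1:
  the numerical semigroup generated by r and r+1 (as a set of naturals).\<close>
definition GSnat :: "nat \<Rightarrow> nat set" where
  "GSnat r = {a * r + b * (r + 1) | a b. True}"

definition GS :: "nat \<Rightarrow> int set" where
  "GS r = int ` GSnat r"

definition gamma :: "nat \<Rightarrow> nat \<Rightarrow> int" where
  "gamma r i = int (enumerate (GSnat r) (i - 1))"

definition ltilde :: "nat \<Rightarrow> int \<Rightarrow> nat" where
  "ltilde r b = (if b = -1 then 0 else Max {i. i \<ge> 1 \<and> gamma r i \<le> b})"

definition R :: "nat \<Rightarrow> int \<Rightarrow> nat" where
  "R r M = Min {ltilde r a + ltilde r b | a b. a \<ge> -1 \<and> b \<ge> -1 \<and> a + b = M}"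

end

theory Submission imports Defs begin

lemma GS_mem:
  assumes r: "r \<ge> 1"
  shows "s \<in> GSnat r \<longleftrightarrow> s mod r \<le> s div r"
proof
  assume "s \<in> GSnat r"
  then obtain a b where s: "s = a*r + b*(r+1)" unfolding GSnat_def by blast
  have e: "s = (a + b + b div r) * r + b mod r"
    using s by (simp add: algebra_simps)
  have m: "b mod r < r" using r by simp
  have "s mod r = b mod r" using e m by simp
  moreover have "s div r = a + b + b div r" using e m r by simp
  ultimately show "s mod r \<le> s div r" by (metis le_add2 mod_less_eq_dividend trans_le_add1 add.commute le_trans)
next
  assume h: "s mod r \<le> s div r"
  have "s = (s div r - s mod r) * r + (s mod r) * (r+1)"
    using h by (simp add: algebra_simps diff_mult_distrib) 
  then show "s \<in> GSnat r" unfolding GSnat_def by blast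
qed

lemma GS_inf:
  assumes r: "r \<ge> 1"
  shows "infinite (GSnat r)"
proof -
  have "\<forall>m. \<exists>n\<ge>m. n \<in> GSnat r"
  proof
    fix m
    have "m * r \<in> GSnat r" unfolding GSnat_def by (rule CollectI, rule exI[of _ m], rule exI[of _ 0]) simp
    moreover have "m \<le> m * r" using r by simp
    ultimately show "\<exists>n\<ge>m. n \<in> GSnat r" by blast
  qed
  then show ?thesis using infinite_nat_iff_unbounded_le by blast
qed

lemma downclosed_eq:
  fixes A :: "nat set"
  assumes f: "finite A" and d: "\<And>m n. m \<le> n \<Longrightarrow> n \<in> A \<Longrightarrow> m \<in> A"
  shows "A = {..<card A}"
proof (rule set_eqI, rule iffI)
  fix n assume n: "n \<in> A"
  have "{..n} \<subseteq> A" using d n by auto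
  then have "card {..n} \<le> card A" using f by (rule card_mono[rotated])
  then show "n \<in> {..<card A}" by simp
next
  fix n assume n: "n \<in> {..<card A}"
  show "n \<in> A"
  proof (rule ccontr)
    assume "n \<notin> A"
    then have "A \<subseteq> {..<n}" using d by (meson lessThan_iff not_le_imp_less subsetI)
    then have "card A \<le> n" using card_mono[of "{..<n}" A] by simp
    then show False using n by simp
  qed
qed

lemma enum_count:
  fixes S :: "nat set"
  assumes S: "infinite S"
  shows "{n. enumerate S n \<le> b} = {..<card {s\<in>S. s \<le> b}}"
proof -
  let ?A = "{n. enumerate S n \<le> b}"
  have img: "enumerate S ` ?A = {s\<in>S. s \<le> b}"
  proof
    show "enumerate S ` ?A \<subseteq> {s\<in>S. s \<le> b}" using enumerate_in_set[OF S] by auto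
    show "{s\<in>S. s \<le> b} \<subseteq> enumerate S ` ?A"
    proof
      fix s assume "s \<in> {s\<in>S. s \<le> b}"
      then obtain n where "enumerate S n = s" "s \<le> b" using enumerate_Ex[OF S] by blast
      then show "s \<in> enumerate S ` ?A" by force
    qed
  qed
  have inj: "inj_on (enumerate S) ?A" using inj_enumerate[OF S] by (simp add: inj_on_def)
  have c: "card ?A = card {s\<in>S. s \<le> b}" using card_image[OF inj] img by simp
  have fin: "finite ?A"
  proof (rule finite_subset[of _ "{..b}"])
    show "?A \<subseteq> {..b}" using le_enumerate[OF S] by (auto intro: le_trans)
  qed simp
  have "?A = {..<card ?A}"
  proof (rule downclosed_eq[OF fin])
    fix m n assume "m \<le> n" "n \<in> ?A"
    then show "m \<in> ?A" using enumerate_mono_le_iff[OF S, of m n] by auto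
  qed
  then show ?thesis using c by simp
qed

definition Cn :: "nat \<Rightarrow> nat \<Rightarrow> nat" where "Cn r x = card {s \<in> GSnat r. s \<le> x}"

lemma ltilde_Cn:
  assumes r: "r \<ge> 1" and b: "b \<ge> 0"
  shows "ltilde r b = Cn r (nat b)"
proof -
  have inf: "infinite (GSnat r)" using GS_inf[OF r] .
  have z: "0 \<in> GSnat r" unfolding GSnat_def by auto
  have fin: "finite {s \<in> GSnat r. s \<le> nat b}" by simp
  have "{0} \<subseteq> {s \<in> GSnat r. s \<le> nat b}" using z by auto
  then have "card {0::nat} \<le> card {s \<in> GSnat r. s \<le> nat b}" by (rule card_mono[OF fin])
  then have c1: "Cn r (nat b) \<ge> 1" unfolding Cn_def by simp
  have "{i. i \<ge> 1 \<and> gamma r i \<le> b} = {1..Cn r (nat b)}"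
  proof (rule set_eqI)
    fix i
    have "(i \<ge> 1 \<and> gamma r i \<le> b) \<longleftrightarrow> (i \<ge> 1 \<and> enumerate (GSnat r) (i - 1) \<le> nat b)"
      unfolding gamma_def using b by auto
    also have "\<dots> \<longleftrightarrow> (i \<ge> 1 \<and> i - 1 < Cn r (nat b))"
    proof -
      have "enumerate (GSnat r) (i - 1) \<le> nat b \<longleftrightarrow> i - 1 \<in> {n. enumerate (GSnat r) n \<le> nat b}" by simp
      also have "\<dots> \<longleftrightarrow> i - 1 < Cn r (nat b)" unfolding enum_count[OF inf, of "nat b"] Cn_def by simp
      finally show ?thesis by simp
    qed
    also have "\<dots> \<longleftrightarrow> i \<in> {1..Cn r (nat b)}" by auto
    finally show "i \<in> {i. i \<ge> 1 \<and> gamma r i \<le> b} \<longleftrightarrow> i \<in> {1..Cn r (nat b)}" by simp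
  qed
  moreover have "Max {1..Cn r (nat b)} = Cn r (nat b)" using c1 by (intro Max_eqI) auto
  ultimately show ?thesis unfolding ltilde_def using b by simp
qed

definition Tr :: "int \<Rightarrow> int" where "Tr k = k * (k + 1) div 2"
definition Fk :: "int \<Rightarrow> int \<Rightarrow> int" where "Fk k j = Tr k + min j k + 1"

lemma Tr_Suc: "Tr (k + 1) = Tr k + k + 1"
proof -
  have "(k + 1) * (k + 1 + 1) = k * (k + 1) + 2 * (k + 1)" by algebra
  then show ?thesis unfolding Tr_def by simp
qed

lemma Tr_Suc': "Tr (1 + k) = Tr k + k + 1" using Tr_Suc[of k] by (simp add: add.commute)

lemma Tr_0: "Tr 0 = 0" and Tr_m1: "Tr (-1) = 0" unfolding Tr_def by simp_all

lemma Cn_Suc: "Cn r (Suc x) = Cn r x + (if Suc x \<in> GSnat r then 1 else 0)"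
proof -
  have e: "{s \<in> GSnat r. s \<le> Suc x} = {s \<in> GSnat r. s \<le> x} \<union> (if Suc x \<in> GSnat r then {Suc x} else {})"
    by (auto simp: le_Suc_eq)
  show ?thesis unfolding Cn_def e by (simp add: card_insert_if)
qed

lemma Cn_0: "Cn r 0 = 1"
proof -
  have "{s \<in> GSnat r. s \<le> 0} = {0}" unfolding GSnat_def by auto
  then show ?thesis unfolding Cn_def by simp
qed

lemma Cn_closed:
  assumes r: "r \<ge> 1"
  shows "x < r * r \<Longrightarrow> int (Cn r x) = Fk (int (x div r)) (int (x mod r))"
proof (induction x)
  case 0
  then show ?case using r by (simp add: Cn_0 Fk_def Tr_0)
next
  case (Suc x)
  then have IH: "int (Cn r x) = Fk (int (x div r)) (int (x mod r))" by simp
  have q: "x div r < r" using Suc.prems r by (simp add: div_less_iff_less_mult)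
  have m: "x mod r < r" using r by simp
  show ?case
  proof (cases "Suc (x mod r) = r")
    case True
    have d: "Suc x div r = Suc (x div r)" "Suc x mod r = 0" using True r by (simp_all add: div_Suc mod_Suc)
    have mem: "Suc x \<in> GSnat r" using GS_mem[OF r] d by simp
    have "int (x mod r) = int r - 1" using True by simp
    moreover have "Tr (int (Suc (x div r))) = Tr (int (x div r)) + int (x div r) + 1"
      using Tr_Suc'[of "int (x div r)"] by simp
    ultimately show ?thesis using IH d mem q unfolding Cn_Suc Fk_def
        by simp
  next
    case False
    have d: "Suc x div r = x div r" "Suc x mod r = Suc (x mod r)" using False r by (simp_all add: div_Suc mod_Suc)
    have mem: "Suc x \<in> GSnat r \<longleftrightarrow> Suc (x mod r) \<le> x div r" using GS_mem[OF r] d by simp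
    show ?thesis using IH d mem unfolding Cn_Suc Fk_def by auto
  qed
qed

lemma blk_le:
  fixes k k' j j' r :: int
  assumes "r > 0" "0 \<le> j" "j' < r" "k * r + j \<le> k' * r + j'"
  shows "k \<le> k'"
proof (rule ccontr)
  assume "\<not> k \<le> k'"
  then have "k' + 1 \<le> k" by simp
  then have "(k' + 1) * r \<le> k * r" using assms(1) by (simp add: mult_right_mono)
  then show False using assms by (simp add: algebra_simps)
qed

lemma LF:
  fixes k j :: int
  assumes r: "r \<ge> 1" and j: "0 \<le> j" "j < int r" and lo: "-1 \<le> k * int r + j" and hi: "k * int r + j < int r * int r"
  shows "int (ltilde r (k * int r + j)) = Fk k j"
proof (cases "k * int r + j = -1")
  case True
  have "k \<le> -1" using blk_le[where k=k and j=j and k'="-1" and j'="int r - 1" and r="int r"] True j r by simp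
  moreover have "-1 \<le> k" using blk_le[where k="-1" and j="int r - 1" and k'=k and j'=j and r="int r"] True j r by simp
  ultimately have k: "k = -1" by simp
  then have "j = int r - 1" using True by simp
  then show ?thesis using True k r unfolding ltilde_def Fk_def by (simp add: Tr_m1)
next
  case False
  then have x0: "k * int r + j \<ge> 0" using lo by simp
  have "ltilde r (k * int r + j) = Cn r (nat (k * int r + j))" using ltilde_Cn[OF r x0] .
  moreover have "nat (k * int r + j) < r * r" using hi x0 by (simp add: nat_less_iff)
  ultimately have e: "int (ltilde r (k * int r + j)) = Fk (int (nat (k * int r + j) div r)) (int (nat (k * int r + j) mod r))"
    using Cn_closed[OF r] by simp
  have dv: "(k * int r + j) div int r = k" using j r by simp
  have md: "(k * int r + j) mod int r = j" using j r by simp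
  have "int (nat (k * int r + j) div r) = k" using dv x0 by (simp add: zdiv_int)
  moreover have "int (nat (k * int r + j) mod r) = j" using md x0 by (simp add: zmod_int)
  ultimately show ?thesis using e by simp
qed

lemma decomp:
  fixes x :: int
  assumes "r \<ge> 1"
  obtains k j where "x = k * int r + j" "0 \<le> j" "j < int r"
proof -
  have "x = (x div int r) * int r + x mod int r" by simp
  moreover have "0 \<le> x mod int r" "x mod int r < int r" using assms by simp_all
  ultimately show ?thesis using that by blast
qed

lemma w_mono:
  fixes x y :: int
  assumes r: "r \<ge> 1" and xy: "-1 \<le> x" "x \<le> y" and hi: "y + int r < int r * int r"
  shows "int (ltilde r (x + int r)) - int (ltilde r x) \<le> int (ltilde r (y + int r)) - int (ltilde r y)"
proof -
  obtain k j where x: "x = k * int r + j" "0 \<le> j" "j < int r" using decomp[OF r] by blast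
  obtain k' j' where y: "y = k' * int r + j'" "0 \<le> j'" "j' < int r" using decomp[OF r] by blast
  have kk: "k \<le> k'" using blk_le[where k=k and j=j and k'=k' and j'=j' and r="int r"] x y xy r by simp
  have x1: "x + int r = (k + 1) * int r + j" using x by (simp add: algebra_simps)
  have y1: "y + int r = (k' + 1) * int r + j'" using y by (simp add: algebra_simps)
  have e1: "int (ltilde r x) = Fk k j" using LF[OF r x(2,3)] x xy hi by simp
  have e2: "int (ltilde r y) = Fk k' j'" using LF[OF r y(2,3)] y xy hi by simp
  have e3: "int (ltilde r (x + int r)) = Fk (k+1) j" using LF[OF r x(2,3), of "k+1"] x1 xy hi by simp
  have e4: "int (ltilde r (y + int r)) = Fk (k'+1) j'" using LF[OF r y(2,3), of "k'+1"] y1 xy hi by simp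
  have jj: "k = k' \<Longrightarrow> j \<le> j'" using x y xy by simp
  show ?thesis unfolding e1 e2 e3 e4 Fk_def Tr_Suc using kk jj by (cases "k = k'") (auto simp: min_def)
qed

lemma core:
  fixes al be e r ja jb T P dh jh dA jA da db ka kb Ta Tb TH TA TL :: int
  assumes "al \<ge> 1" "0 \<le> be" "be < r" "e = 0 \<or> e = 1" "0 \<le> ja" "ja < r" "0 \<le> jb" "jb < r"
    and "al + 2 \<le> r"
    and dad: "da = -1 \<or> da = 0" and dbd: "db = 0 \<or> db = 1"
    and sum: "ja + jb + (da + db) * r = 2 * be + e"
    and w1: "2 * (da * r + ja) \<le> 2 * be + e" and w2: "2 * be + e \<le> 2 * (da * r + ja) + r"
    and h: "(be + e < r \<and> dh = 0 \<and> jh = be + e) \<or> (be + e \<ge> r \<and> dh = 1 \<and> jh = be + e - r)"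
    and A: "(2*be + e + 1 < r \<and> dA = 0 \<and> jA = 2*be+e+1) \<or> (2*be+e+1 \<ge> r \<and> 2*be+e+1 < 2*r \<and> dA = 1 \<and> jA = 2*be+e+1 - r) \<or> (2*be+e+1 \<ge> 2*r \<and> dA = 2 \<and> jA = 2*be+e+1 - 2*r)"
    and ka: "ka = al + da" and kb: "kb = al + db"
    and Ta: "Ta = (if da = 0 then T else T - al)" and Tb: "Tb = (if db = 0 then T else T + al + 1)"
    and TH: "TH = (if dh = 0 then T else T + al + 1)"
    and TA: "TA = (if dA = 0 then T else if dA = 1 then T + al + 1 else T + 2*al + 3)"
    and TL: "TL = T - al"
  shows "min (T + min be al + 1 + (TH + min jh (al + dh) + 1))
             (TL + min (r - 1) (al - 1) + 1 + (TA + min jA (al + dA) + 1))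
         \<le> Ta + min ja ka + 1 + (Tb + min jb kb + 1)
     \<and> (be \<le> al \<longrightarrow> TL + min (r - 1) (al - 1) + 1 + (TA + min jA (al + dA) + 1)
         \<le> Ta + min ja ka + 1 + (Tb + min jb kb + 1))"
  using assms
  apply (elim disjE)
  apply (simp_all add: min_def split: if_splits)
  done

lemma Tr_pred: "Tr (k - 1) = Tr k - k"
  using Tr_Suc[of "k - 1"] by simp

lemma window:
  fixes N al be a :: int
  assumes r: "r \<ge> 1" and N0: "0 \<le> N" and Nhi: "N + int r + 2 \<le> int r * int r"
    and hd: "N div 2 = al * int r + be" and b0: "0 \<le> be" and b1: "be < int r" and al: "al \<ge> 1"
    and wa: "2 * a \<le> N" and wb: "N \<le> 2 * a + int r"
  shows "min (int (ltilde r (N div 2)) + int (ltilde r (N - N div 2)))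
             (int (ltilde r (al * int r - 1)) + int (ltilde r (N - (al * int r - 1))))
         \<le> int (ltilde r a) + int (ltilde r (N - a))
     \<and> (be \<le> al \<longrightarrow> int (ltilde r (al * int r - 1)) + int (ltilde r (N - (al * int r - 1)))
         \<le> int (ltilde r a) + int (ltilde r (N - a)))"
proof -
  define e where "e = N mod 2"
  have Ne: "N = 2 * (al * int r + be) + e" using hd unfolding e_def by (metis div_mult_mod_eq mult.commute)
  have e01: "e = 0 \<or> e = 1" unfolding e_def by auto
  define P where "P = al * int r"
  have P1: "(al - 1) * int r = P - int r" "(al + 1) * int r = P + int r" unfolding P_def by (simp_all add: algebra_simps)
  have rP: "int r \<le> P" unfolding P_def using al r by simp
  have alr: "al + 2 \<le> int r"
  proof (rule ccontr)
    assume "\<not> al + 2 \<le> int r"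
    then have "int r - 1 \<le> al" by simp
    then have "(int r - 1) * int r \<le> al * int r" by (simp add: mult_right_mono)
    moreover have "al * int r \<ge> 0" using al by simp
    ultimately show False using Ne Nhi b0 e01 by (simp add: algebra_simps)
  qed
  obtain ka ja where a: "a = ka * int r + ja" "0 \<le> ja" "ja < int r" using decomp[OF r] by blast
  obtain kb jb where b: "N - a = kb * int r + jb" "0 \<le> jb" "jb < int r" using decomp[OF r] by blast
  have e0: "0 \<le> e" using e01 by auto
  have r0: "int r \<ge> 1" using r by simp
  have i1: "(al - 1) * int r + 0 \<le> ka * int r + ja" unfolding P1 using a wb Ne b0 e0 r0 P_def by arith
  have ka1: "al - 1 \<le> ka" using blk_le[OF _ _ _ i1] a r by simp
  have i2: "ka * int r + ja \<le> al * int r + be" using a wa Ne e01 by arith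
  have ka2: "ka \<le> al" using blk_le[OF _ _ _ i2] a b1 r by simp
  have i3: "al * int r + 0 \<le> kb * int r + jb" using b wa Ne e0 b0 by arith
  have kb1: "al \<le> kb" using blk_le[OF _ _ _ i3] b r by simp
  have i4: "kb * int r + jb \<le> (al + 1) * int r + be" unfolding P1 using b wb Ne e01 a P_def by arith
  have kb2: "kb \<le> al + 1" using blk_le[OF _ _ _ i4] b b1 r by simp
  define da where "da = ka - al"
  define db where "db = kb - al"
  have dad: "da = -1 \<or> da = 0" using ka1 ka2 unfolding da_def by auto
  have dbd: "db = 0 \<or> db = 1" using kb1 kb2 unfolding db_def by auto
  have kad: "ka * int r = P + da * int r" unfolding da_def P_def by (simp add: algebra_simps)
  have kbd: "kb * int r = P + db * int r" unfolding db_def P_def by (simp add: algebra_simps)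
  have sum: "ja + jb + (da + db) * int r = 2 * be + e" using a b Ne kad kbd unfolding P_def by (simp add: algebra_simps)
  have w1: "2 * (da * int r + ja) \<le> 2 * be + e" using wa a kad Ne unfolding P_def by simp
  have w2: "2 * be + e \<le> 2 * (da * int r + ja) + int r" using wb a kad Ne unfolding P_def by simp
  define dh where "dh = (if be + e < int r then 0 else (1::int))"
  define jh where "jh = (if be + e < int r then be + e else be + e - int r)"
  define dA where "dA = (if 2 * be + e + 1 < int r then 0 else if 2 * be + e + 1 < 2 * int r then 1 else (2::int))"
  define jA where "jA = (if 2 * be + e + 1 < int r then 2 * be + e + 1 else if 2 * be + e + 1 < 2 * int r then 2 * be + e + 1 - int r else 2 * be + e + 1 - 2 * int r)"
  have h: "(be + e < int r \<and> dh = 0 \<and> jh = be + e) \<or> (be + e \<ge> int r \<and> dh = 1 \<and> jh = be + e - int r)"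
    unfolding dh_def jh_def by auto
  have A: "(2*be + e + 1 < int r \<and> dA = 0 \<and> jA = 2*be+e+1) \<or> (2*be+e+1 \<ge> int r \<and> 2*be+e+1 < 2*int r \<and> dA = 1 \<and> jA = 2*be+e+1 - int r) \<or> (2*be+e+1 \<ge> 2*int r \<and> dA = 2 \<and> jA = 2*be+e+1 - 2*int r)"
    unfolding dA_def jA_def by auto
  have jh0: "0 \<le> jh" "jh < int r" using h b0 b1 e01 by auto
  have jA0: "0 \<le> jA" "jA < int r" using A b0 b1 e01 by auto
  have xh: "N - N div 2 = (al + dh) * int r + jh" using h Ne hd by (auto simp: algebra_simps)
  have xA: "N - (al * int r - 1) = (al + dA) * int r + jA" using A Ne by (auto simp: algebra_simps)
  have bounds: "N + 1 < int r * int r" using Nhi by simp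
  have a_lo: "0 \<le> a" using wb Ne b0 e0 rP unfolding P_def by arith
  have a_hi: "a < int r * int r" using wa bounds N0 by arith
  have La0: "int (ltilde r (ka * int r + ja)) = Fk ka ja"
    by (rule LF[OF r a(2,3)]) (use a a_lo a_hi in auto)
  have La: "int (ltilde r a) = Fk ka ja" using La0 a(1) by simp
  have Lb0: "int (ltilde r (kb * int r + jb)) = Fk kb jb"
    by (rule LF[OF r b(2,3)]) (use b a_lo wa bounds in auto)
  have Lb: "int (ltilde r (N - a)) = Fk kb jb" using Lb0 b(1) by simp
  have Lh0: "int (ltilde r (al * int r + be)) = Fk al be"
    by (rule LF[OF r b0 b1]) (use hd N0 bounds in auto)
  have Lh: "int (ltilde r (N div 2)) = Fk al be" using Lh0 hd by simp
  have Lh20: "int (ltilde r ((al + dh) * int r + jh)) = Fk (al + dh) jh"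
    by (rule LF[OF r jh0]) (use xh N0 bounds hd in auto)
  have Lh2: "int (ltilde r (N - N div 2)) = Fk (al + dh) jh" using Lh20 xh by simp
  have xA1: "al * int r - 1 = (al - 1) * int r + (int r - 1)" by (simp add: algebra_simps)
  have LA0: "int (ltilde r ((al - 1) * int r + (int r - 1))) = Fk (al - 1) (int r - 1)"
  proof (rule LF[OF r])
    have q: "(al - 1) * int r + (int r - 1) = P - 1" using P1 by simp
    show "0 \<le> int r - 1" "int r - 1 < int r" using r by simp_all
    show "-1 \<le> (al - 1) * int r + (int r - 1)" unfolding q using rP r by simp
    show "(al - 1) * int r + (int r - 1) < int r * int r" unfolding q using bounds Ne b0 e0 P_def rP by arith
  qed
  have LA: "int (ltilde r (al * int r - 1)) = Fk (al - 1) (int r - 1)" using LA0 unfolding xA1 .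
  have LA20: "int (ltilde r ((al + dA) * int r + jA)) = Fk (al + dA) jA"
    by (rule LF[OF r jA0]) (use xA N0 rP bounds P_def Ne b0 e0 in arith)+
  have LA2: "int (ltilde r (N - (al * int r - 1))) = Fk (al + dA) jA" using LA20 xA by simp
  have Tka: "Tr ka = (if da = 0 then Tr al else Tr al - al)"
  proof -
    have "ka = al - 1 \<or> ka = al" using dad unfolding da_def by auto
    then show ?thesis unfolding da_def using Tr_pred[of al] by auto
  qed
  have Tkb: "Tr kb = (if db = 0 then Tr al else Tr al + al + 1)"
  proof -
    have "kb = al + 1 \<or> kb = al" using dbd unfolding db_def by auto
    then show ?thesis unfolding db_def using Tr_Suc[of al] by auto
  qed
  have Th: "Tr (al + dh) = (if dh = 0 then Tr al else Tr al + al + 1)" using h by (auto simp: Tr_Suc)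
  have TA: "Tr (al + dA) = (if dA = 0 then Tr al else if dA = 1 then Tr al + al + 1 else Tr al + 2*al + 3)"
  proof -
    have "Tr (al + 2) = Tr al + 2*al + 3" using Tr_Suc[of al] Tr_Suc[of "al+1"] by (simp add: add.assoc)
    then show ?thesis using A by (auto simp: Tr_Suc)
  qed
  have kaa: "ka = al + da" "kb = al + db" unfolding da_def db_def by simp_all
  show ?thesis
    unfolding La Lb Lh Lh2 LA LA2 Fk_def
    by (rule core[OF al b0 b1 e01 a(2,3) b(2,3) alr dad dbd sum w1 w2 h A kaa Tka Tkb Th TA Tr_pred])
qed

lemma shift:
  fixes N a :: int
  assumes r: "r \<ge> 1" and a: "-1 \<le> a" "2 * a + int r \<le> N" and hi: "N + 1 < int r * int r"
  shows "int (ltilde r (a + int r)) + int (ltilde r (N - (a + int r))) \<le> int (ltilde r a) + int (ltilde r (N - a))"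
proof -
  have "int (ltilde r (a + int r)) - int (ltilde r a) \<le> int (ltilde r (N - a - int r + int r)) - int (ltilde r (N - a - int r))"
    by (rule w_mono[OF r]) (use a hi in arith)+
  moreover have "N - a - int r + int r = N - a" "N - a - int r = N - (a + int r)" by simp_all
  ultimately show ?thesis by simp
qed

lemma lower_half:
  fixes N al be :: int
  assumes r: "r \<ge> 1" and N0: "0 \<le> N" and Nhi: "N + int r + 2 \<le> int r * int r"
    and hd: "N div 2 = al * int r + be" and b0: "0 \<le> be" and b1: "be < int r" and al: "al \<ge> 1"
  shows "\<forall>a. -1 \<le> a \<longrightarrow> 2 * a \<le> N \<longrightarrow> nat (N - 2 * a) = n \<longrightarrow>
      (min (int (ltilde r (N div 2)) + int (ltilde r (N - N div 2)))
             (int (ltilde r (al * int r - 1)) + int (ltilde r (N - (al * int r - 1))))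
         \<le> int (ltilde r a) + int (ltilde r (N - a))
     \<and> (be \<le> al \<longrightarrow> int (ltilde r (al * int r - 1)) + int (ltilde r (N - (al * int r - 1)))
         \<le> int (ltilde r a) + int (ltilde r (N - a))))"
proof (induction n rule: less_induct)
  case (less n)
  show ?case
  proof (intro allI impI)
    fix a assume a1: "-1 \<le> a" and a2: "2 * a \<le> N" and an: "nat (N - 2 * a) = n"
    let ?f = "\<lambda>a. int (ltilde r a) + int (ltilde r (N - a))"
    let ?m = "min (int (ltilde r (N div 2)) + int (ltilde r (N - N div 2)))
             (int (ltilde r (al * int r - 1)) + int (ltilde r (N - (al * int r - 1))))"
    let ?v = "int (ltilde r (al * int r - 1)) + int (ltilde r (N - (al * int r - 1)))"
    show "?m \<le> ?f a \<and> (be \<le> al \<longrightarrow> ?v \<le> ?f a)"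
    proof (cases "N \<le> 2 * a + int r")
      case True
      show ?thesis by (rule window[OF r N0 Nhi hd b0 b1 al a2 True])
    next
      case False
      have hi: "N + 1 < int r * int r" using Nhi by simp
      have sh: "?f (a + int r) \<le> ?f a" using shift[OF r a1 _ hi] False by simp
      show ?thesis
      proof (cases "2 * (a + int r) \<le> N")
        case True
        have lt: "nat (N - 2 * (a + int r)) < n" using an False r by simp
        have bb1: "-1 \<le> a + int r" "2 * (a + int r) \<le> N" using a1 True r by simp_all
        have "?m \<le> ?f (a + int r) \<and> (be \<le> al \<longrightarrow> ?v \<le> ?f (a + int r))"
          by (rule less.IH[OF lt, rule_format, OF bb1 refl])
        then show ?thesis using sh by linarith
      next
        case c2: False
        define b where "b = N - (a + int r)"
        have fb: "?f b = ?f (a + int r)" unfolding b_def by (simp add: add.commute)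
        have lt: "nat (N - 2 * b) < n" using an False c2 r unfolding b_def by simp
        have bb1: "-1 \<le> b" "2 * b \<le> N" using a1 c2 False r unfolding b_def by simp_all
        have "?m \<le> ?f b \<and> (be \<le> al \<longrightarrow> ?v \<le> ?f b)"
          by (rule less.IH[OF lt, rule_format, OF bb1 refl])
        then show ?thesis using sh fb by linarith
      qed
    qed
  qed
qed

theorem proposition3p15:
  fixes r :: nat and N alpha beta :: int
  assumes "r \<ge> 1"
    and "0 \<le> N" and "N \<le> 2 * (int r * (int r - 1) div 2) - 2"
    and "N div 2 = alpha * int r + beta" and "0 \<le> beta" and "beta < int r"
    and "alpha \<ge> 1"
  shows "(N div 2 \<notin> GS r \<longrightarrow>
            R r N = min (ltilde r (N div 2) + ltilde r ((N + 1) div 2))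
                        (ltilde r (alpha * int r - 1) + ltilde r (N - alpha * int r + 1)))
       \<and> (N div 2 \<in> GS r \<longrightarrow>
            R r N = ltilde r (alpha * int r - 1) + ltilde r (N - alpha * int r + 1))"
proof -
  note r = assms(1) and N0 = assms(2) and hd = assms(4) and b0 = assms(5) and b1 = assms(6) and al = assms(7)
  define X where "X = int r * (int r - 1)"
  have "2 * (X div 2) \<le> X" using div_mult_mod_eq[of X 2] pos_mod_sign[of 2 X] by linarith
  moreover have "X = int r * int r - int r" unfolding X_def by (simp add: algebra_simps)
  ultimately have Nhi: "N + int r + 2 \<le> int r * int r" using assms(3) unfolding X_def[symmetric] by linarith
  define f where "f a = ltilde r a + ltilde r (N - a)" for a
  have Rset: "{ltilde r a + ltilde r b | a b. a \<ge> -1 \<and> b \<ge> -1 \<and> a + b = N} = f ` {-1..N+1}"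
    unfolding f_def by (auto intro!: image_eqI) force+
  have Rf: "R r N = Min (f ` {-1..N+1})" unfolding R_def Rset ..
  have fin: "finite (f ` {-1..N+1})" by simp
  define h where "h = N div 2"
  define A where "A = alpha * int r - 1"
  have c1: "(N + 1) div 2 = N - h" unfolding h_def by linarith
  have c2: "N - alpha * int r + 1 = N - A" unfolding A_def by simp
  have hA: "h \<in> {-1..N+1}" unfolding h_def using N0 by auto
  have AA: "A \<in> {-1..N+1}"
  proof -
    have "alpha * int r \<ge> 1" using al r by (simp add: order_trans[OF _ mult_right_mono[of 1 alpha "int r"]])
    moreover have "alpha * int r \<le> h" unfolding h_def using hd b0 by simp
    ultimately show ?thesis unfolding A_def using N0 unfolding h_def by auto
  qed
  have low: "\<And>a. a \<in> {-1..N+1} \<Longrightarrow> min (f h) (f A) \<le> f a \<and> (beta \<le> alpha \<longrightarrow> f A \<le> f a)"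
  proof -
    fix a assume a: "a \<in> {-1..N+1}"
    have key: "\<And>a. -1 \<le> a \<Longrightarrow> 2 * a \<le> N \<Longrightarrow> min (f h) (f A) \<le> f a \<and> (beta \<le> alpha \<longrightarrow> f A \<le> f a)"
    proof -
      fix a assume a1: "-1 \<le> a" and a2: "2 * a \<le> N"
      have "min (int (ltilde r (N div 2)) + int (ltilde r (N - N div 2)))
             (int (ltilde r (alpha * int r - 1)) + int (ltilde r (N - (alpha * int r - 1))))
         \<le> int (ltilde r a) + int (ltilde r (N - a))
        \<and> (beta \<le> alpha \<longrightarrow> int (ltilde r (alpha * int r - 1)) + int (ltilde r (N - (alpha * int r - 1)))
         \<le> int (ltilde r a) + int (ltilde r (N - a)))"
        using lower_half[OF r N0 Nhi hd b0 b1 al, rule_format, OF a1 a2 refl] .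
      then show "min (f h) (f A) \<le> f a \<and> (beta \<le> alpha \<longrightarrow> f A \<le> f a)"
        unfolding f_def h_def A_def by linarith
    qed
    show "min (f h) (f A) \<le> f a \<and> (beta \<le> alpha \<longrightarrow> f A \<le> f a)"
    proof (cases "2 * a \<le> N")
      case True
      then show ?thesis using key a by auto
    next
      case False
      have "f (N - a) = f a" unfolding f_def by (simp add: add.commute)
      moreover have "min (f h) (f A) \<le> f (N - a) \<and> (beta \<le> alpha \<longrightarrow> f A \<le> f (N - a))"
        using key[of "N - a"] a False by auto
      ultimately show ?thesis by simp
    qed
  qed
  have mem: "h \<in> GS r \<longleftrightarrow> beta \<le> alpha"
  proof -
    have h0: "h \<ge> 0" unfolding h_def using N0 by simp
    have "h \<in> GS r \<longleftrightarrow> nat h \<in> GSnat r" unfolding GS_def using h0 by (auto simp: image_iff intro!: bexI[of _ "nat h"])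
    also have "\<dots> \<longleftrightarrow> nat h mod r \<le> nat h div r" using GS_mem[OF r] .
    also have "\<dots> \<longleftrightarrow> h mod int r \<le> h div int r" 
    proof -
      have "int (nat h mod r) = h mod int r" using h0 by (simp add: zmod_int)
      moreover have "int (nat h div r) = h div int r" using h0 by (simp add: zdiv_int)
      ultimately show ?thesis by linarith
    qed
    finally have e: "h \<in> GS r \<longleftrightarrow> h mod int r \<le> h div int r" .
    have "h mod int r = beta" "h div int r = alpha" unfolding h_def hd using b0 b1 by simp_all
    then show ?thesis using e by simp
  qed
  have case1: "R r N = min (f h) (f A)"
    unfolding Rf
  proof (rule Min_eqI[OF fin])
    show "\<And>y. y \<in> f ` {-1..N+1} \<Longrightarrow> min (f h) (f A) \<le> y" using low by auto
    show "min (f h) (f A) \<in> f ` {-1..N+1}" using hA AA by (simp add: min_def)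
  qed
  have case2: "beta \<le> alpha \<Longrightarrow> R r N = f A"
    unfolding Rf
  proof (rule Min_eqI[OF fin])
    assume "beta \<le> alpha"
    then show "\<And>y. y \<in> f ` {-1..N+1} \<Longrightarrow> f A \<le> y" using low by auto
    show "f A \<in> f ` {-1..N+1}" using AA by simp
  qed
  show ?thesis unfolding c1 c2 using case1 case2 mem unfolding f_def h_def A_def by auto
qed

end
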